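(* Let $m\ge 1$ and $u,v\in\{0,1\}^m$. Then there exists a tilde-transformation from $u$ to $v$ of length $\mathrm{dist}_\sim(u,v)$ in which, for every $i=1,\dots,m$, the symbol in position $i$ is modified by at most one of the operations. In other words, a minimal tilde-transformation from $u$ to $v$ always exists.
   Context: Words are over the binary alphabet $\{0,1\}$; for $w=a_1\cdots a_m$ write $w[i]=a_i$. The replacement $R_i$ replaces $a_i$ by the other binary symbol; it modifies position $i$. The swap $S_i$ is defined only when $a_i\neq a_{i+1}$ and exchanges $a_i$ and $a_{i+1}$; it modifies positions $i$ and $i+1$. For equal-length words $u,v$, the tilde-distance $\mathrm{dist}_\sim(u,v)$ is the minimum number of replacements and swaps needed to transform $u$ into $v$. A tilde-transformation of length $h$ from $u$ to $v$ is a sequence of words $(w_0,\dots,w_h)$ with $w_0=u$, $w_h=v$, and each $w_{k+1}$ obtained from $w_k$ by a single replacement or swap. It is minimal if $h=\mathrm{dist}_\sim(u,v)$ and each position is modified by at most one of its operations. *)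

theory Defs
  imports Main
begin

(* Binary words are lists of bool (False = 0, True = 1).  Positions are 1-based:
   w[i] = w ! (i - 1) for 1 <= i <= length w. *)

datatype op = Repl nat | Swap nat

fun apply_op :: "op \<Rightarrow> bool list \<Rightarrow> bool list \<Rightarrow> bool" where
  "apply_op (Repl i) w w' \<longleftrightarrow>
     1 \<le> i \<and> i \<le> length w \<and> w' = w[i - 1 := \<not> w ! (i - 1)]"
| "apply_op (Swap i) w w' \<longleftrightarrow>
     1 \<le> i \<and> i + 1 \<le> length w \<and> w ! (i - 1) \<noteq> w ! i \<and>
     w' = w[i - 1 := w ! i, i := w ! (i - 1)]"

fun modified :: "op \<Rightarrow> nat set" where
  "modified (Repl i) = {i}"
| "modified (Swap i) = {i, i + 1}"

definition tilde_transformation ::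
    "bool list \<Rightarrow> bool list \<Rightarrow> bool list list \<Rightarrow> op list \<Rightarrow> bool" where
  "tilde_transformation u v ws ops \<longleftrightarrow>
     length ws = length ops + 1 \<and> ws ! 0 = u \<and> ws ! length ops = v \<and>
     (\<forall>k < length ops. apply_op (ops ! k) (ws ! k) (ws ! Suc k))"

definition dist_tilde :: "bool list \<Rightarrow> bool list \<Rightarrow> nat" where
  "dist_tilde u v = (LEAST h. \<exists>ws ops. length ops = h \<and> tilde_transformation u v ws ops)"

definition minimal_tilde_transformation ::
    "bool list \<Rightarrow> bool list \<Rightarrow> bool list list \<Rightarrow> op list \<Rightarrow> bool" where
  "minimal_tilde_transformation u v ws ops \<longleftrightarrow>
     tilde_transformation u v ws ops \<and> length ops = dist_tilde u v \<and>
     (\<forall>i. 1 \<le> i \<and> i \<le> length u \<longrightarrow>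
        card {k. k < length ops \<and> i \<in> modified (ops ! k)} \<le> 1)"

end

theory Submission
  imports Defs
begin

fun tc :: "bool list \<Rightarrow> bool list \<Rightarrow> nat" where
"tc (a#a'#u) (b#b'#v) = (if a = b then tc (a'#u) (b'#v)
   else if a' = b \<and> b' = a then Suc (min (tc (a'#u) (b'#v)) (tc u v)) else Suc (tc (a'#u) (b'#v)))"
| "tc (a#u) (b#v) = (if a = b then tc u v else Suc (tc u v))"
| "tc _ _ = 0"

lemma tcG: "tc (x#u) (y#v) \<le> Suc (tc u v)"
  by (cases u; cases v) auto

lemma tcH: "tc u v \<le> tc (x#u) (y#v)"
proof (cases u; cases v)
  fix a u' b v' assume "u = a#u'" "v = b#v'"
  thus ?thesis using tcG[of a u' b v'] by auto
qed auto

lemma tc_eq[simp]: "tc (x#u) (x#v) = tc u v"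
  by (cases u; cases v) auto

lemma tc_toggle: "length u = length v \<Longrightarrow> j < length u \<Longrightarrow> tc u v \<le> Suc (tc (u[j := \<not> u!j]) v)"
proof (induction u v arbitrary: j rule: tc.induct)
  case (1 a a' u b b' v)
  show ?case
  proof (cases j)
    case 0
    then show ?thesis using tcG[of a "a'#u" b "b'#v"] tcH[of "a'#u" "b'#v" "\<not>a" b] tcG[of a' u b' v] by auto
  next
    case (Suc j')
    show ?thesis
    proof (cases j')
      case 0
      show ?thesis
      proof (cases "a = b")
        case True
        then show ?thesis using "1.IH"(1)[of 0] "1.prems" Suc 0 by auto
      next
        case False
        then show ?thesis using Suc 0 tcG[of "\<not>a'" u b' v] tcH[of u v "\<not>a'" b'] tcG[of a' u b' v] tcH[of u v a' b']
          by (cases a; cases a'; cases b'; cases b) (auto simp: min_def)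
      qed
    next
      case (Suc j'')
      have l: "j'' < length u" using "1.prems" \<open>j = Suc j'\<close> Suc by simp
      show ?thesis
        using "1.IH"(1)[of "Suc j''"] "1.IH"(2)[of "Suc j''"] "1.IH"(3)[of j''] "1.IH"(4)[of "Suc j''"]
          "1.prems" l \<open>j = Suc j'\<close> Suc by (auto simp: min_def)
    qed
  qed
qed (auto simp: less_Suc_eq_0_disj)

lemma tc_swap: "length u = length v \<Longrightarrow> Suc j < length u \<Longrightarrow> u!j \<noteq> u!Suc j \<Longrightarrow>
   tc u v \<le> Suc (tc (u[j := u!Suc j, Suc j := u!j]) v)"
proof (induction u v arbitrary: j rule: tc.induct)
  case (1 a a' u b b' v)
  show ?case
  proof (cases j)
    case 0
    then show ?thesis using "1.prems" tcG[of a' u b' v] tcH[of u v a' b'] tcG[of a u b' v] tcH[of u v a b']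
      by (cases a; cases a'; cases b'; cases b) (auto simp: min_def)
  next
    case (Suc j')
    show ?thesis
    proof (cases j')
      case 0
      obtain x u3 where u: "u = x#u3" using "1.prems" Suc 0 by (cases u) auto
      obtain c v3 where v: "v = c#v3" using "1.prems" u by (cases v) auto
      show ?thesis
      proof (cases "a = b")
        case True
        then show ?thesis using "1.IH"(1)[of 0] "1.prems" Suc 0 by auto
      next
        case False
        have t1: "tc (a#u3) v \<le> Suc (tc (b#u3) v)" using tc_toggle[of "a#u3" v 0] "1.prems" u v False
          by (cases a; cases b) auto
        have t2: "tc (b#u3) v \<le> Suc (tc (a#u3) v)" using tc_toggle[of "b#u3" v 0] "1.prems" u v False
          by (cases a; cases b) auto
        show ?thesis using False Suc 0 "1.prems" u v t1 t2 tcG[of b u3 c v3] tcG[of a u3 c v3]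
          "1.IH"(4)[of 0]
          by (cases a; cases a'; cases b'; cases b; cases x) (auto simp: min_def)
      qed
    next
      case (Suc j'')
      have l: "Suc j'' < length u" using "1.prems" \<open>j = Suc j'\<close> Suc by simp
      show ?thesis
        using "1.IH"(1)[of "Suc j''"] "1.IH"(2)[of "Suc j''"] "1.IH"(3)[of j''] "1.IH"(4)[of "Suc j''"]
          "1.prems" l \<open>j = Suc j'\<close> Suc by (auto simp: min_def)
    qed
  qed
qed (auto simp: less_Suc_eq_0_disj)

inductive steps :: "bool list \<Rightarrow> bool list \<Rightarrow> op list \<Rightarrow> bool" where
  st0: "steps w w []"
| st1: "apply_op p w w' \<Longrightarrow> steps w' v ops \<Longrightarrow> steps w v (p#ops)"

lemma tt_of_steps: "steps u v ops \<Longrightarrow> \<exists>ws. tilde_transformation u v ws ops"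
proof (induction rule: steps.induct)
  case (st0 w)
  then show ?case by (rule exI[of _ "[w]"]) (simp add: tilde_transformation_def)
next
  case (st1 p w w' v ops)
  then obtain ws where ws: "tilde_transformation w' v ws ops" by blast
  show ?case
    apply (rule exI[of _ "w#ws"])
    using ws st1(1) by (auto simp: tilde_transformation_def less_Suc_eq_0_disj)
qed

lemma steps_of_tt: "tilde_transformation u v ws ops \<Longrightarrow> steps u v ops"
proof (induction ops arbitrary: u ws)
  case Nil
  then show ?case by (auto simp: tilde_transformation_def intro: st0)
next
  case (Cons p ops)
  then obtain w0 ws' where ws: "ws = w0 # ws'" by (cases ws) (auto simp: tilde_transformation_def)
  have "tilde_transformation (ws'!0) v ws' ops" using Cons.prems ws
    by (auto simp: tilde_transformation_def)
  hence "steps (ws'!0) v ops" using Cons.IH by blast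
  moreover have "apply_op p u (ws'!0)" using Cons.prems ws
    by (auto simp: tilde_transformation_def)
  ultimately show ?case by (blast intro: st1)
qed

lemma apply_len: "apply_op p w w' \<Longrightarrow> length w' = length w"
  by (cases p) auto

lemma tc_step: "apply_op p w w' \<Longrightarrow> length w = length v \<Longrightarrow> tc w v \<le> Suc (tc w' v)"
proof (cases p)
  case (Repl i)
  assume a: "apply_op p w w'" "length w = length v"
  then show ?thesis using tc_toggle[of w v "i - 1"] Repl by auto
next
  case (Swap i)
  assume a: "apply_op p w w'" "length w = length v"
  then show ?thesis using tc_swap[of w v "i - 1"] Swap by auto
qed

lemma lower: "steps u v ops \<Longrightarrow> length u = length v \<Longrightarrow> tc u v \<le> length ops"
proof (induction rule: steps.induct)
  case (st0 w)
  then show ?case by (induction w) auto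
next
  case (st1 p w w' v ops)
  then show ?case using tc_step[of p w w' v] apply_len[of p w w'] by auto
qed

fun sh :: "op \<Rightarrow> op" where
  "sh (Repl i) = Repl (Suc i)"
| "sh (Swap i) = Swap (Suc i)"

lemma mod_sh[simp]: "modified (sh p) = Suc ` modified p"
  by (cases p) auto

lemma apply_sh: "apply_op p w w' \<Longrightarrow> apply_op (sh p) (a#w) (a#w')"
proof (cases p)
  case (Repl i)
  assume "apply_op p w w'"
  then show ?thesis using Repl by (cases i) auto
next
  case (Swap i)
  assume "apply_op p w w'"
  then show ?thesis using Swap by (cases i) auto
qed

lemma steps_sh: "steps w v ops \<Longrightarrow> steps (a#w) (a#v) (map sh ops)"
  by (induction rule: steps.induct) (auto intro: steps.intros apply_sh)

fun dj :: "op list \<Rightarrow> bool" where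
  "dj [] = True"
| "dj (p#ops) = (modified p \<inter> \<Union>(modified ` set ops) = {} \<and> dj ops)"

definition pos :: "op list \<Rightarrow> bool" where
  "pos ops = (\<forall>p\<in>set ops. 0 \<notin> modified p)"

lemma dj_sh: "dj ops \<Longrightarrow> dj (map sh ops)"
  by (induction ops) auto

lemma pos_sh: "pos (map sh ops)"
  by (auto simp: pos_def)

lemma ext_eq: "steps u v ops \<Longrightarrow> dj ops \<Longrightarrow>
   steps (a#u) (a#v) (map sh ops) \<and> dj (map sh ops) \<and> pos (map sh ops)"
  using steps_sh dj_sh pos_sh by blast

lemma ext_repl: "steps u v ops \<Longrightarrow> dj ops \<Longrightarrow> pos ops \<Longrightarrow> a \<noteq> b \<Longrightarrow>
   steps (a#u) (b#v) (Repl 1 # map sh ops) \<and> dj (Repl 1 # map sh ops) \<and> pos (Repl 1 # map sh ops)"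
proof -
  assume h: "steps u v ops" "dj ops" "pos ops" "a \<noteq> b"
  have "apply_op (Repl 1) (a#u) (b#u)" using h(4) by auto
  moreover have "steps (b#u) (b#v) (map sh ops)" using steps_sh h(1) by blast
  ultimately have "steps (a#u) (b#v) (Repl 1 # map sh ops)" by (rule st1)
  moreover have "1 \<notin> \<Union>(modified ` set (map sh ops))" using h(3) by (auto simp: pos_def)
  ultimately show ?thesis using dj_sh[OF h(2)] by (auto simp: pos_def)
qed

lemma ext_swap: "steps u v ops \<Longrightarrow> dj ops \<Longrightarrow> pos ops \<Longrightarrow> a \<noteq> b \<Longrightarrow>
   steps (a#b#u) (b#a#v) (Swap 1 # map sh (map sh ops)) \<and> dj (Swap 1 # map sh (map sh ops))
   \<and> pos (Swap 1 # map sh (map sh ops))"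
proof -
  assume h: "steps u v ops" "dj ops" "pos ops" "a \<noteq> b"
  have "apply_op (Swap 1) (a#b#u) (b#a#u)" using h(4) by auto
  moreover have "steps (b#a#u) (b#a#v) (map sh (map sh ops))" using steps_sh h(1) by blast
  ultimately have "steps (a#b#u) (b#a#v) (Swap 1 # map sh (map sh ops))" by (rule st1)
  moreover have "1 \<notin> \<Union>(modified ` set (map sh (map sh ops)))" 
     "2 \<notin> \<Union>(modified ` set (map sh (map sh ops)))" using h(3) by (auto simp: pos_def)
  ultimately show ?thesis using dj_sh[OF dj_sh[OF h(2)]] by (auto simp: pos_def)
qed

lemma construct: "length u = length v \<Longrightarrow> \<exists>ops. steps u v ops \<and> length ops = tc u v \<and> dj ops \<and> pos ops"
proof (induction u v rule: tc.induct)
  case (1 a a' u b b' v)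
  show ?case
  proof (cases "a = b")
    case True
    then obtain ops where "steps (a'#u) (b'#v) ops" "length ops = tc (a'#u) (b'#v)" "dj ops"
      using 1 by auto
    then show ?thesis using ext_eq[of "a'#u" "b'#v" ops a] True by (intro exI[of _ "map sh ops"]) auto
  next
    case F: False
    show ?thesis
    proof (cases "a' = b \<and> b' = a \<and> tc u v < tc (a'#u) (b'#v)")
      case True
      then obtain ops where "steps u v ops" "length ops = tc u v" "dj ops" "pos ops"
        using 1 F by auto
      then show ?thesis using ext_swap[of u v ops a b] True F
        by (intro exI[of _ "Swap 1 # map sh (map sh ops)"]) auto
    next
      case False
      then obtain ops where "steps (a'#u) (b'#v) ops" "length ops = tc (a'#u) (b'#v)" "dj ops" "pos ops"
        using 1 F by (cases "a' = b \<and> b' = a") auto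
      then show ?thesis using ext_repl[of "a'#u" "b'#v" ops a b] False F
        by (intro exI[of _ "Repl 1 # map sh ops"]) auto
    qed
  qed
next
  case ("2_1" a b v)
  then show ?case using ext_repl[of "[]" "[]" "[]" a b] by (auto intro: st0 simp: pos_def)
next
  case ("2_2" a u b)
  then show ?case using ext_repl[of "[]" "[]" "[]" a b] by (auto intro: st0 simp: pos_def)
qed (auto intro: st0 simp: pos_def)

lemma dj_nth: "dj ops \<Longrightarrow> k1 < k2 \<Longrightarrow> k2 < length ops \<Longrightarrow> modified (ops!k1) \<inter> modified (ops!k2) = {}"
proof (induction ops arbitrary: k1 k2)
  case Nil
  then show ?case by simp
next
  case (Cons p ops)
  show ?case
  proof (cases k1)
    case 0
    then obtain k where k: "k2 = Suc k" using Cons.prems by (cases k2) auto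
    hence "ops!k \<in> set ops" using Cons.prems by auto
    then show ?thesis using Cons.prems 0 k by fastforce
  next
    case (Suc k)
    then obtain k' where k: "k2 = Suc k'" using Cons.prems by (cases k2) auto
    then show ?thesis using Cons Suc by auto
  qed
qed

lemma dj_card: "dj ops \<Longrightarrow> card {k. k < length ops \<and> i \<in> modified (ops ! k)} \<le> 1"
proof -
  assume d: "dj ops"
  have "\<forall>x\<in>{k. k < length ops \<and> i \<in> modified (ops ! k)}. \<forall>y\<in>{k. k < length ops \<and> i \<in> modified (ops ! k)}. x = y"
  proof (intro ballI, rule ccontr)
    fix x y assume xy: "x \<in> {k. k < length ops \<and> i \<in> modified (ops ! k)}" "y \<in> {k. k < length ops \<and> i \<in> modified (ops ! k)}" "x \<noteq> y"
    show False
    proof (cases "x < y")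
      case True then show False using dj_nth[OF d True] xy by auto
    next
      case False hence yx: "y < x" using xy by auto
      show False using dj_nth[OF d yx] xy by auto
    qed
  qed
  thus ?thesis using card_le_Suc0_iff_eq[of "{k. k < length ops \<and> i \<in> modified (ops ! k)}"] by auto
qed

theorem lemma1:
  fixes u v :: "bool list" and m :: nat
  assumes "m \<ge> 1" and "length u = m" and "length v = m"
  shows "\<exists>ws ops. minimal_tilde_transformation u v ws ops"
proof -
  have len: "length u = length v" using assms by simp
  obtain ops where o: "steps u v ops" "length ops = tc u v" "dj ops" using construct[OF len] by blast
  obtain ws where ws: "tilde_transformation u v ws ops" using tt_of_steps[OF o(1)] by blast
  have "dist_tilde u v = tc u v"
    unfolding dist_tilde_def
  proof (rule Least_equality)
    show "\<exists>ws ops'. length ops' = tc u v \<and> tilde_transformation u v ws ops'" using ws o by blast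
  next
    fix y assume "\<exists>ws ops. length ops = y \<and> tilde_transformation u v ws ops"
    then obtain ws' ops' where "length ops' = y" "tilde_transformation u v ws' ops'" by blast
    then show "tc u v \<le> y" using lower[OF steps_of_tt len] by blast
  qed
  then show ?thesis unfolding minimal_tilde_transformation_def using ws o dj_card by metis
qed

end
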